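(* Let $N,w,h$ be positive integers with $w\geq 2$ and $N/h\leq w\leq N-h+1$. Let $$f_N(w,h)=\max\Big\{\sum_{l=1}^{|\Lambda|}N_l^2\ :\ \Lambda \text{ a partition of }\{1,\dots,N\}\text{ with }\max\Lambda\leq w,\ |\Lambda|\geq h\Big\}.$$ Then $f_N(w,h)=kw^2+u^2+v$, where $k=\left\lfloor\frac{N-h}{w-1}\right\rfloor$, $u=N-h+1-(w-1)k$, and $v=h-k-1$.
   Context: A partition $\Lambda=\{A_1,\dots,A_{|\Lambda|}\}$ of $\{1,\dots,N\}$ is a collection of nonempty pairwise disjoint subsets whose union is $\{1,\dots,N\}$; $|\Lambda|$ is the number of subsets, $N_l=|A_l|$, and $\max\Lambda=\max_lN_l$. *)

theory Defs
  imports Complex_Main "HOL-Library.Disjoint_Sets"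
begin

definition f_part :: "nat \<Rightarrow> nat \<Rightarrow> nat \<Rightarrow> nat" where
  "f_part N w h = Max {(\<Sum>B\<in>P. card B ^ 2) | P.
      partition_on {1..N} P \<and> (\<forall>B\<in>P. card B \<le> w) \<and> h \<le> card P}"

end

theory Submission imports Defs begin

definition gq :: "nat \<Rightarrow> nat \<Rightarrow> nat" where
  "gq c a = (a div c) * c^2 + (a mod c)^2"

lemma gq_step:
  assumes c: "c > 0" and b: "b \<le> c"
  shows "gq c a + b^2 \<le> gq c (a + b)"
proof -
  define q where "q = a div c"
  define r where "r = a mod c"
  have a: "a = q*c + r" unfolding q_def r_def by simp
  have rc: "r < c" unfolding r_def using c by simp
  show ?thesis
  proof (cases "r + b < c")
    case True
    have e: "a+b = q*c + (r+b)" unfolding a by simp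
    have "(a+b) div c = q" "(a+b) mod c = r + b"
      using True c unfolding e by simp_all
    then show ?thesis unfolding gq_def q_def[symmetric] r_def[symmetric]
      by (simp add: power2_sum)
  next
    case False
    define s where "s = r + b - c"
    define d where "d = c - b"
    have s: "s < c" "s \<le> b" using False rc b unfolding s_def by auto
    have e: "a + b = (q+1)*c + s" using False unfolding a s_def by simp
    have "(a+b) div c = q+1" "(a+b) mod c = s"
    proof -
      have e2: "a + b = s + (q+1)*c" using e by simp
      have "(s + (q+1)*c) div c = (q+1) + s div c" using c div_mult_self1[of c s "q+1"] by simp
      moreover have "(s + (q+1)*c) mod c = s mod c" using mod_mult_self1[of s "q+1" c] by simp
      ultimately show "(a+b) div c = q+1" "(a+b) mod c = s" unfolding e2 using s by simp_all
    qed
    moreover have "r^2 + b^2 \<le> c^2 + s^2"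
    proof -
      have r: "r = s + d" and cc: "c = b + d" using False b unfolding s_def d_def by auto
      have "s*d \<le> b*d" using s by simp
      then show ?thesis unfolding r cc by (simp add: power2_sum)
    qed
    ultimately show ?thesis unfolding gq_def q_def[symmetric] r_def[symmetric]
      by (simp add: algebra_simps)
  qed
qed

lemma gq_mono:
  assumes "c > 0" "a \<le> a'"
  shows "gq c a \<le> gq c a'"
proof -
  have "gq c a \<le> gq c (a + t)" for t
  proof (induction t)
    case (Suc t)
    have "gq c (a+t) + 1^2 \<le> gq c (a + t + 1)" using gq_step[of c 1 "a+t"] assms by simp
    then show ?case using Suc by simp
  qed simp
  from this[of "a' - a"] assms show ?thesis by simp
qed

lemma gq_sum:
  assumes "finite P" "c > 0" "\<And>x. x \<in> P \<Longrightarrow> y x \<le> c"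
  shows "(\<Sum>x\<in>P. (y x)^2) \<le> gq c (\<Sum>x\<in>P. y x)"
  using assms
proof (induction P rule: finite_induct)
  case empty
  then show ?case by (simp add: gq_def)
next
  case (insert x F)
  have "(\<Sum>x\<in>insert x F. (y x)^2) = (\<Sum>x\<in>F. (y x)^2) + (y x)^2" using insert by simp
  also have "\<dots> \<le> gq c (\<Sum>x\<in>F. y x) + (y x)^2" using insert by simp
  also have "\<dots> \<le> gq c ((\<Sum>x\<in>F. y x) + y x)" using gq_step insert by simp
  finally show ?case using insert by (simp add: add.commute)
qed

lemma list_partition:
  assumes "\<forall>x\<in>set xs. x > 0"
  shows "\<exists>P. partition_on {1..sum_list xs} P \<and> card P = length xs \<and> (\<forall>B\<in>P. card B \<in> set xs)
     \<and> (\<Sum>B\<in>P. card B ^ 2) = sum_list (map (\<lambda>x. x^2) xs)"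
  using assms
proof (induction xs)
  case Nil
  then show ?case by (auto simp: partition_on_empty)
next
  case (Cons x xs)
  then obtain P where P: "partition_on {1..sum_list xs} P" "card P = length xs"
    "\<forall>B\<in>P. card B \<in> set xs" "(\<Sum>B\<in>P. card B ^ 2) = sum_list (map (\<lambda>x. x^2) xs)" by auto
  define S where "S = sum_list xs"
  define B where "B = {S+1..S+x}"
  have fin: "finite P" using P(1) finite_elements by blast
  have U: "\<Union>P = {1..S}" using partition_onD1[OF P(1)] S_def by simp
  have dj: "disjnt B (\<Union>P)" unfolding U B_def disjnt_def by auto
  have Bne: "B \<noteq> {}" using Cons unfolding B_def by auto
  have BP: "B \<notin> P" using dj Bne by (auto simp: disjnt_def)
  have "partition_on {1..sum_list (x#xs)} (insert B P)"
  proof (subst partition_on_insert[OF dj], intro conjI)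
    have "{1..sum_list (x # xs)} - B = {1..S}" unfolding B_def S_def by auto
    then show "partition_on ({1..sum_list (x # xs)} - B) P" using P(1) S_def by simp
    show "B \<subseteq> {1..sum_list (x # xs)}" unfolding B_def S_def by auto
  qed (rule Bne)
  moreover have "card B = x" unfolding B_def by simp
  ultimately show ?case using P fin BP by auto
qed

theorem lemma1:
  fixes N w h :: nat
  assumes "N > 0" "w > 0" "h > 0" "w \<ge> 2"
    and "real N / real h \<le> real w"
    and "real w \<le> real N - real h + 1"
  shows "int (f_part N w h) =
           (let k = \<lfloor>(real N - real h) / (real w - 1)\<rfloor>;
                u = int N - int h + 1 - (int w - 1) * k;
                v = int h - k - 1
            in k * int w ^ 2 + u ^ 2 + v)"
proof -
  define c where "c = w - 1"
  define S where "S = N - h"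
  define k where "k = S div c"
  define r where "r = S mod c"
  define T where "T = gq c S + 2*S + h"
  have c0: "c > 0" using assms(4) c_def by simp
  have Nh: "h + 1 \<le> N" using assms(4,6) by linarith
  have "real N \<le> real w * real h" using assms(3,5) by (simp add: divide_le_eq)
  hence Nwh: "N \<le> w * h" by (metis of_nat_le_iff of_nat_mult)
  have Sch: "S \<le> c * h" using Nwh unfolding S_def c_def by (simp add: diff_mult_distrib)
  have Skr: "S = k*c + r" unfolding k_def r_def by simp
  have rc: "r < c" unfolding r_def using c0 by simp
  have kh: "k \<le> h" using Sch c0 unfolding k_def
    by (metis div_le_mono nonzero_mult_div_cancel_left not_gr0)
  have gS: "gq c S = k*c^2 + r^2" unfolding gq_def k_def r_def by simp
  have upper: "(\<Sum>B\<in>P. card B ^ 2) \<le> T"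
    if P: "partition_on {1..N} P" and Pw: "\<forall>B\<in>P. card B \<le> w" and hP: "h \<le> card P" for P
  proof -
    have fin: "finite P" using P finite_elements by blast
    have finB: "finite B" if "B \<in> P" for B
      using P that partition_onD1[OF P] by (metis Union_upper finite_atLeastAtMost finite_subset)
    have ne: "card B \<ge> 1" if "B \<in> P" for B
      using partition_onD3[OF P] that finB[OF that] by (metis One_nat_def Suc_leI card_gt_0_iff)
    define y :: "nat set \<Rightarrow> nat" where "y B = card B - 1" for B
    have cy: "card B = y B + 1" if "B \<in> P" for B using ne[OF that] y_def by simp
    have sN: "N = (\<Sum>B\<in>P. card B)" using product_partition[OF P finB] by simp
    also have "\<dots> = (\<Sum>B\<in>P. y B + 1)" using cy by (intro sum.cong) auto
    also have "\<dots> = (\<Sum>B\<in>P. y B) + card P" by (simp only: sum.distrib) simp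
    finally have sN2: "N = (\<Sum>B\<in>P. y B) + card P" .
    have "(\<Sum>B\<in>P. card B ^ 2) = (\<Sum>B\<in>P. (y B)^2 + 2 * y B + 1)"
      using cy by (intro sum.cong) (auto simp: power2_eq_square)
    also have "\<dots> = (\<Sum>B\<in>P. (y B)^2) + 2 * (\<Sum>B\<in>P. y B) + card P"
      by (simp only: sum.distrib sum_distrib_left) simp
    also have "\<dots> \<le> gq c (\<Sum>B\<in>P. y B) + 2 * (\<Sum>B\<in>P. y B) + card P"
    proof -
      have "y B \<le> c" if "B \<in> P" for B using Pw that unfolding y_def c_def by (simp add: diff_le_mono)
      then show ?thesis using gq_sum[OF fin c0, of y] by simp
    qed
    also have "\<dots> \<le> gq c S + 2 * (\<Sum>B\<in>P. y B) + card P"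
      using gq_mono[OF c0, of "\<Sum>B\<in>P. y B" S] sN2 hP unfolding S_def by simp
    also have "\<dots> \<le> T" unfolding T_def S_def using sN2 hP by simp
    finally show ?thesis .
  qed
  have wit: "\<exists>P. partition_on {1..N} P \<and> (\<forall>B\<in>P. card B \<le> w) \<and> h \<le> card P \<and> (\<Sum>B\<in>P. card B ^ 2) = T"
  proof (cases "k < h")
    case True
    define xs where "xs = replicate k w @ [r+1] @ replicate (h-k-1) 1"
    have "\<forall>x\<in>set xs. x > 0" unfolding xs_def using assms(2) by auto
    then obtain P where P: "partition_on {1..sum_list xs} P" "card P = length xs" "\<forall>B\<in>P. card B \<in> set xs"
      "(\<Sum>B\<in>P. card B ^ 2) = sum_list (map (\<lambda>x. x^2) xs)" using list_partition by blast
    have "sum_list xs = k*w + (r+1) + (h-k-1)" unfolding xs_def by (simp add: sum_list_replicate)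
    also have "\<dots> = N" using True Skr Nh unfolding S_def c_def using assms(4)
      by (simp add: algebra_simps)
    finally have sl: "sum_list xs = N" .
    have "sum_list (map (\<lambda>x. x^2) xs) = k*w^2 + (r+1)^2 + (h-k-1)" unfolding xs_def
      by (simp add: sum_list_replicate)
    also have "\<dots> = T"
    proof -
      define m where "m = h - k - 1"
      have hm: "h = k + 1 + m" using True m_def by simp
      have w: "w = c + 1" using assms(4) c_def by simp
      show ?thesis unfolding T_def gS unfolding Skr hm w by (simp add: power2_eq_square algebra_simps)
    qed
    finally have sq: "sum_list (map (\<lambda>x. x^2) xs) = T" .
    have "\<forall>x\<in>set xs. x \<le> w" unfolding xs_def using rc c_def by auto
    moreover have "length xs = h" unfolding xs_def using True by simp
    ultimately show ?thesis using P sl sq by (intro exI[of _ P]) auto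
  next
    case False
    hence kh2: "k = h" using kh by simp
    have r0: "r = 0" using Sch Skr kh2 by (simp add: mult.commute)
    define xs where "xs = replicate h w"
    have "\<forall>x\<in>set xs. x > 0" unfolding xs_def using assms(2) by auto
    then obtain P where P: "partition_on {1..sum_list xs} P" "card P = length xs" "\<forall>B\<in>P. card B \<in> set xs"
      "(\<Sum>B\<in>P. card B ^ 2) = sum_list (map (\<lambda>x. x^2) xs)" using list_partition by blast
    have w: "w = c + 1" using assms(4) c_def by simp
    have NS: "N = S + h" using Nh S_def by simp
    have sl: "sum_list xs = N" unfolding xs_def NS Skr kh2 r0 w by (simp add: sum_list_replicate algebra_simps)
    have sq: "sum_list (map (\<lambda>x. x^2) xs) = T" unfolding xs_def T_def gS unfolding Skr kh2 r0 w
      by (simp add: sum_list_replicate power2_eq_square algebra_simps)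
    have "\<forall>x\<in>set xs. x \<le> w" unfolding xs_def by auto
    moreover have "length xs = h" unfolding xs_def by simp
    ultimately show ?thesis using P sl sq by (intro exI[of _ P]) auto
  qed
  have fT: "f_part N w h = T"
  proof -
    let ?A = "{(\<Sum>B\<in>P. card B ^ 2) | P.
      partition_on {1..N} P \<and> (\<forall>B\<in>P. card B \<le> w) \<and> h \<le> card P}"
    have sub: "?A \<subseteq> {..T}" using upper by auto
    have "Max ?A = T"
    proof (rule Max_eqI)
      show "finite ?A" using finite_subset[OF sub] by simp
      show "y \<le> T" if "y \<in> ?A" for y using that sub by auto
      show "T \<in> ?A" using wit by auto
    qed
    then show ?thesis unfolding f_part_def .
  qed
  have fl: "\<lfloor>(real N - real h) / (real w - 1)\<rfloor> = int k"
  proof -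
    have "(real N - real h) / (real w - 1) = real S / real c"
      unfolding S_def c_def using Nh assms(4) by (simp add: of_nat_diff)
    then show ?thesis unfolding k_def by (simp add: floor_divide_of_nat_eq)
  qed
  have "N = S + h" using Nh S_def by simp
  hence iN: "int N = int k * int c + int r + int h" unfolding Skr by simp
  have iw: "int w = int c + 1" using assms(4) c_def by simp
  have "int T = int k * int c ^ 2 + int r ^ 2 + 2 * (int k * int c + int r) + int h"
    unfolding T_def gS unfolding Skr by simp
  then show ?thesis unfolding fT fl Let_def iN iw
    by (simp add: power2_eq_square algebra_simps)
qed

end
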